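(* Let $n\ge2$, $N\ge1$, $L>0$, $h=L/N$. There is a constant $C>0$ independent of $h$ such that the following holds. Let $\Phi=(\Phi_{ij})_{i,j=1}^{n-1}$ be a matrix of edge-centered grid functions such that at every edge point $\ell+\frac12$ the matrix $(\Phi_{ij,\ell+\frac12})$ is symmetric positive definite, and let $\lambda_{\min}>0$ be the minimum over $\ell=1,\dots,N$ of the eigenvalues of $(\Phi_{ij,\ell+\frac12})_{i,j}$. Let $\phi\in\mathring{\mathcal C}^{n-1}_{\rm per}$ satisfy $\|\phi\|_{L^\infty}:=\max_{i,\ell}|\phi_{i,\ell}|\le M$. Then $$\|\mathcal L_\Phi^{-1}\phi\|_{L^\infty}\le\frac{CM}{\lambda_{\min}}\,h^{-\frac12}(n-1)^{\frac12}.$$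
   Context: Grid on the torus $[0,L]$ with $N$ intervals, $h=L/N$: cell-centered grid functions are $N$-periodic sequences $(f_\ell)$, edge-centered ones $N$-periodic sequences $(f_{\ell+\frac12})$. $(d_h\phi)_\ell=(\phi_{\ell+\frac12}-\phi_{\ell-\frac12})/h$, $(D_hf)_{\ell+\frac12}=(f_{\ell+1}-f_\ell)/h$. $\mathring{\mathcal C}^{n-1}_{\rm per}$ denotes $(n-1)$-tuples $f=(f_1,\dots,f_{n-1})$ of cell-centered grid functions with $\sum_{\ell=1}^Nf_{i,\ell}=0$ for each $i$. The operator $\mathcal L_\Phi:\mathring{\mathcal C}^{n-1}_{\rm per}\to\mathring{\mathcal C}^{n-1}_{\rm per}$ is $(\mathcal L_\Phi f)_i=-\sum_{j=1}^{n-1}d_h(\Phi_{ij}D_hf_j)$ (products pointwise on edges); it is invertible on $\mathring{\mathcal C}^{n-1}_{\rm per}$, and $\mathcal L_\Phi^{-1}\phi$ denotes the unique $f\in\mathring{\mathcal C}^{n-1}_{\rm per}$ with $\mathcal L_\Phi f=\phi$; $\|f\|_{L^\infty}=\max_{i,\ell}|f_{i,\ell}|$. *)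

theory Defs
  imports "HOL-Analysis.Analysis"
begin

text \<open>Species/components are indexed by i in {1..m} (m = n-1).
A cell-centered grid function is g :: int \<Rightarrow> real with g l = value at cell l.
An edge-centered grid function is p :: int \<Rightarrow> real with p l = value at edge l+1/2.
A tuple of grid functions is f :: nat \<Rightarrow> int \<Rightarrow> real (component i = f i);
a matrix of edge functions is Phi :: nat \<Rightarrow> nat \<Rightarrow> int \<Rightarrow> real.\<close>

definition periodic_grid :: "nat \<Rightarrow> (int \<Rightarrow> real) \<Rightarrow> bool" where
  "periodic_grid N g \<longleftrightarrow> (\<forall>l. g (l + int N) = g l)"

text \<open>(D_h f)_{l+1/2} = (f_{l+1} - f_l)/h, stored at index l.\<close>
definition Dh :: "real \<Rightarrow> (int \<Rightarrow> real) \<Rightarrow> int \<Rightarrow> real" where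
  "Dh h f l = (f (l + 1) - f l) / h"

text \<open>(d_h p)_l = (p_{l+1/2} - p_{l-1/2})/h; p_{l+1/2} is stored at index l.\<close>
definition dh :: "real \<Rightarrow> (int \<Rightarrow> real) \<Rightarrow> int \<Rightarrow> real" where
  "dh h p l = (p l - p (l - 1)) / h"

definition in_C0 :: "nat \<Rightarrow> nat \<Rightarrow> (nat \<Rightarrow> int \<Rightarrow> real) \<Rightarrow> bool" where
  "in_C0 n N f \<longleftrightarrow> (\<forall>i\<in>{1..n-1}. periodic_grid N (f i) \<and> (\<Sum>l=1..int N. f i l) = 0)"

definition LPhi :: "nat \<Rightarrow> real \<Rightarrow> (nat \<Rightarrow> nat \<Rightarrow> int \<Rightarrow> real) \<Rightarrow> (nat \<Rightarrow> int \<Rightarrow> real)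
    \<Rightarrow> nat \<Rightarrow> int \<Rightarrow> real" where
  "LPhi n h Phi f i l = - dh h (\<lambda>k. \<Sum>j\<in>{1..n-1}. Phi i j k * Dh h (f j) k) l"

text \<open>The inverse: the unique element f of the space with L_Phi f = phi
(components outside {1..n-1} normalised to 0 so that it is a unique object).\<close>
definition LPhi_inv :: "nat \<Rightarrow> nat \<Rightarrow> real \<Rightarrow> (nat \<Rightarrow> nat \<Rightarrow> int \<Rightarrow> real)
    \<Rightarrow> (nat \<Rightarrow> int \<Rightarrow> real) \<Rightarrow> (nat \<Rightarrow> int \<Rightarrow> real)" where
  "LPhi_inv n N h Phi phi = (THE f. in_C0 n N f \<and> (\<forall>i. i \<notin> {1..n-1} \<longrightarrow> f i = (\<lambda>_. 0))
       \<and> (\<forall>i\<in>{1..n-1}. \<forall>l. LPhi n h Phi f i l = phi i l))"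

definition Linf_norm :: "nat \<Rightarrow> nat \<Rightarrow> (nat \<Rightarrow> int \<Rightarrow> real) \<Rightarrow> real" where
  "Linf_norm n N f = Max {\<bar>f i l\<bar> | i l. i \<in> {1..n-1} \<and> l \<in> {1..int N}}"

definition sym_pos_def :: "nat \<Rightarrow> (nat \<Rightarrow> nat \<Rightarrow> real) \<Rightarrow> bool" where
  "sym_pos_def m A \<longleftrightarrow> (\<forall>i\<in>{1..m}. \<forall>j\<in>{1..m}. A i j = A j i) \<and>
     (\<forall>x. (\<exists>i\<in>{1..m}. x i \<noteq> 0) \<longrightarrow> (\<Sum>i\<in>{1..m}. \<Sum>j\<in>{1..m}. x i * A i j * x j) > 0)"

definition is_eigenvalue :: "nat \<Rightarrow> (nat \<Rightarrow> nat \<Rightarrow> real) \<Rightarrow> real \<Rightarrow> bool" where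
  "is_eigenvalue m A mu \<longleftrightarrow> (\<exists>x. (\<exists>i\<in>{1..m}. x i \<noteq> 0) \<and>
     (\<forall>i\<in>{1..m}. (\<Sum>j\<in>{1..m}. A i j * x j) = mu * x i))"

definition lambda_min :: "nat \<Rightarrow> nat \<Rightarrow> (nat \<Rightarrow> nat \<Rightarrow> int \<Rightarrow> real) \<Rightarrow> real" where
  "lambda_min n N Phi = Min (\<Union>l\<in>{1..int N}. {mu. is_eigenvalue (n-1) (\<lambda>i j. Phi i j l) mu})"

end

theory Submission
  imports Defs "Jordan_Normal_Form.Determinant" "Jordan_Normal_Form.Char_Poly"
begin


definition qf :: "nat \<Rightarrow> (nat \<Rightarrow> nat \<Rightarrow> real) \<Rightarrow> (nat \<Rightarrow> real) \<Rightarrow> real" where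
  "qf m A x = (\<Sum>i\<in>{1..m}. \<Sum>j\<in>{1..m}. x i * A i j * x j)"

definition nsq :: "nat \<Rightarrow> (nat \<Rightarrow> real) \<Rightarrow> real" where
  "nsq m x = (\<Sum>i\<in>{1..m}. (x i)^2)"

lemma compact_sphere_fun:
  "compact {x::nat\<Rightarrow>real. x \<in> PiE UNIV (\<lambda>i. if i \<in> {1..m} then {-1..1} else {0}) \<and> nsq m x = 1}"
proof -
  let ?K = "PiE UNIV (\<lambda>i::nat. if i \<in> {1..m} then {-1..1::real} else {0})"
  have "compactin (product_topology (\<lambda>i. euclidean) UNIV) ?K"
    by (subst compactin_PiE) auto
  hence cK: "compact ?K" by (simp add: euclidean_product_topology compactin_euclidean_iff)
  have "closed {x::nat\<Rightarrow>real. nsq m x = 1}"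
    unfolding nsq_def
    by (intro closed_Collect_eq continuous_intros continuous_on_product_coordinates)
  from compact_Int_closed[OF cK this] show ?thesis by (simp add: Int_def)
qed

lemma qf_cong: "(\<And>i. i \<in> {1..m} \<Longrightarrow> x i = y i) \<Longrightarrow> qf m A x = qf m A y"
  unfolding qf_def by (intro sum.cong refl) auto

lemma nsq_cong: "(\<And>i. i \<in> {1..m} \<Longrightarrow> x i = y i) \<Longrightarrow> nsq m x = nsq m y"
  unfolding nsq_def by (intro sum.cong refl) auto

lemma qf_scale: "qf m A (\<lambda>i. c * x i) = c^2 * qf m A x"
  unfolding qf_def by (simp add: sum_distrib_left power2_eq_square mult_ac)

lemma nsq_scale: "nsq m (\<lambda>i. c * x i) = c^2 * nsq m x"
  unfolding nsq_def by (simp add: sum_distrib_left power2_eq_square mult_ac)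

lemma qf_add:
  assumes sym: "\<forall>i\<in>{1..m}. \<forall>j\<in>{1..m}. A i j = A j i"
  shows "qf m A (\<lambda>i. x i + t * y i) = qf m A x + 2*t*(\<Sum>i\<in>{1..m}. y i * (\<Sum>j\<in>{1..m}. A i j * x j)) + t^2 * qf m A y"
proof -
  have e: "(x i + t * y i) * A i j * (x j + t * y j) = x i * A i j * x j + t * (x i * A i j * y j) + t * (y i * A i j * x j) + t^2 * (y i * A i j * y j)" for i j
    by (simp add: algebra_simps power2_eq_square)
  have s1: "(\<Sum>i\<in>{1..m}. \<Sum>j\<in>{1..m}. x i * A i j * y j) = (\<Sum>i\<in>{1..m}. \<Sum>j\<in>{1..m}. y i * A i j * x j)"
  proof -
    have "(\<Sum>i\<in>{1..m}. \<Sum>j\<in>{1..m}. x i * A i j * y j) = (\<Sum>j\<in>{1..m}. \<Sum>i\<in>{1..m}. x i * A i j * y j)"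
      by (rule sum.swap)
    also have "\<dots> = (\<Sum>j\<in>{1..m}. \<Sum>i\<in>{1..m}. y j * A j i * x i)"
      using sym by (intro sum.cong refl) (simp add: mult_ac)
    finally show ?thesis .
  qed
  have "qf m A (\<lambda>i. x i + t * y i) = (\<Sum>i\<in>{1..m}. \<Sum>j\<in>{1..m}. x i * A i j * x j) + t * (\<Sum>i\<in>{1..m}. \<Sum>j\<in>{1..m}. x i * A i j * y j) + t * (\<Sum>i\<in>{1..m}. \<Sum>j\<in>{1..m}. y i * A i j * x j) + t^2 * (\<Sum>i\<in>{1..m}. \<Sum>j\<in>{1..m}. y i * A i j * y j)"
    unfolding qf_def e by (simp add: sum.distrib sum_distrib_left)
  also have "\<dots> = qf m A x + 2*t*(\<Sum>i\<in>{1..m}. y i * (\<Sum>j\<in>{1..m}. A i j * x j)) + t^2 * qf m A y"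
    unfolding s1 qf_def by (simp add: sum_distrib_left mult_ac)
  finally show ?thesis .
qed

lemma nsq_add: "nsq m (\<lambda>i. x i + t * y i) = nsq m x + 2*t*(\<Sum>i\<in>{1..m}. x i * y i) + t^2 * nsq m y"
  unfolding nsq_def by (simp add: power2_eq_square algebra_simps sum.distrib sum_distrib_left)

lemma nsq_nonneg: "nsq m x \<ge> 0" unfolding nsq_def by (simp add: sum_nonneg)

lemma nsq_zero: "nsq m x = 0 \<Longrightarrow> i \<in> {1..m} \<Longrightarrow> x i = 0"
  unfolding nsq_def by (subst (asm) sum_nonneg_eq_0_iff) auto

lemma quad_nonneg_imp:
  fixes W c :: real
  assumes "W \<ge> 0" "\<forall>t. 0 \<le> 2*t*W + t^2*c"
  shows "W = 0"
proof (rule ccontr)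
  assume "W \<noteq> 0" hence W: "W > 0" using assms by auto
  show False
  proof (cases "c \<le> 0")
    case True
    from assms(2)[rule_format, of "-1"] have "0 \<le> -2*W + c" by simp
    with True W show False by simp
  next
    case False
    have e1: "(-W/c)^2 * c = W*W/c" using False by (simp add: power2_eq_square field_simps)
    have e2: "2*(-W/c)*W = -2*W*W/c" by simp
    from assms(2)[rule_format, of "-W/c"] have "0 \<le> -2*W*W/c + W*W/c"
      unfolding e1 e2 .
    moreover have "W*W/c > 0" using W False by simp
    ultimately show False by (simp add: field_simps)
  qed
qed

lemma rayleigh_eig:
  assumes m: "m \<ge> 1" and sym: "\<forall>i\<in>{1..m}. \<forall>j\<in>{1..m}. A i j = A j i"
  shows "\<exists>\<mu>. is_eigenvalue m A \<mu> \<and> (\<forall>x. \<mu> * nsq m x \<le> qf m A x)"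
proof -
  define S where "S = {x::nat\<Rightarrow>real. x \<in> PiE UNIV (\<lambda>i. if i \<in> {1..m} then {-1..1} else {0}) \<and> nsq m x = 1}"
  have cS: "compact S" unfolding S_def by (rule compact_sphere_fun)
  define e where "e = (\<lambda>i::nat. if i = 1 then 1::real else 0)"
  have "nsq m e = (\<Sum>i\<in>{1..m}. if i = 1 then 1 else 0)" unfolding nsq_def e_def
    by (intro sum.cong) auto
  also have "\<dots> = 1" using m by simp
  finally have "nsq m e = 1" .
  hence "e \<in> S" unfolding S_def e_def using m by auto
  hence neS: "S \<noteq> {}" by auto
  have cont: "continuous_on S (qf m A)" unfolding qf_def
    by (intro continuous_intros; rule continuous_on_subset[OF continuous_on_product_coordinates]; simp)
  obtain x0 where x0S: "x0 \<in> S" and x0min: "\<forall>y\<in>S. qf m A x0 \<le> qf m A y"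
    using continuous_attains_inf[OF cS neS cont] by blast
  define r where "r = qf m A x0"
  have nx0: "nsq m x0 = 1" using x0S unfolding S_def by auto
  have R: "r * nsq m x \<le> qf m A x" for x
  proof (cases "nsq m x = 0")
    case True
    hence "qf m A x = qf m A (\<lambda>_. 0)" using nsq_zero by (intro qf_cong) auto
    also have "\<dots> = 0" unfolding qf_def by simp
    finally show ?thesis using True by simp
  next
    case False
    define s where "s = nsq m x"
    have s: "s > 0" using False nsq_nonneg[of m x] unfolding s_def by linarith
    define y where "y = (\<lambda>i. if i \<in> {1..m} then (1/sqrt s) * x i else 0)"
    have ny: "nsq m y = 1"
    proof -
      have "nsq m y = nsq m (\<lambda>i. (1/sqrt s) * x i)" unfolding y_def by (rule nsq_cong) auto
      also have "\<dots> = 1" unfolding nsq_scale using s by (simp add: s_def power_divide)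
      finally show ?thesis .
    qed
    have yK: "y \<in> PiE UNIV (\<lambda>i. if i \<in> {1..m} then {-1..1} else {0})"
      proof (rule PiE_I)
        fix i :: nat
        show "y i \<in> (if i \<in> {1..m} then {-1..1} else {0})"
        proof (cases "i \<in> {1..m}")
          case True
          have "(y i)^2 \<le> nsq m y" unfolding nsq_def
            using True by (intro member_le_sum) auto
          hence "(y i)^2 \<le> 1^2" using ny by simp
          hence "\<bar>y i\<bar> \<le> \<bar>1\<bar>" using abs_le_square_iff by blast
          thus ?thesis using True by auto
        next
          case False
          hence "y i = 0" unfolding y_def by meson
          thus ?thesis using False by simp
        qed
      qed simp
    have "y \<in> S" unfolding S_def using yK ny by simp
    hence "r \<le> qf m A y" using x0min unfolding r_def by auto
    also have "qf m A y = qf m A (\<lambda>i. (1/sqrt s) * x i)" unfolding y_def by (rule qf_cong) auto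
    also have "\<dots> = qf m A x / s" unfolding qf_scale using s by (simp add: power_divide)
    finally have "r \<le> qf m A x / s" .
    thus ?thesis using s unfolding s_def[symmetric] by (simp add: field_simps)
  qed
  define w where "w = (\<lambda>i. (\<Sum>j\<in>{1..m}. A i j * x0 j) - r * x0 i)"
  have key: "(\<Sum>i\<in>{1..m}. w i * (\<Sum>j\<in>{1..m}. A i j * x0 j)) - r * (\<Sum>i\<in>{1..m}. x0 i * w i) = nsq m w"
    unfolding nsq_def w_def by (simp add: sum_distrib_left sum_subtractf[symmetric] power2_eq_square algebra_simps)
  have "\<forall>t. 0 \<le> 2*t*nsq m w + t^2 * (qf m A w - r * nsq m w)"
  proof
    fix t :: real
    have "r * nsq m (\<lambda>i. x0 i + t * w i) \<le> qf m A (\<lambda>i. x0 i + t * w i)" by (rule R)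
    hence "r * (1 + 2*t*(\<Sum>i\<in>{1..m}. x0 i * w i) + t^2 * nsq m w) \<le> r + 2*t*(\<Sum>i\<in>{1..m}. w i * (\<Sum>j\<in>{1..m}. A i j * x0 j)) + t^2 * qf m A w"
      unfolding nsq_add qf_add[OF sym] nx0 r_def .
    thus "0 \<le> 2*t*nsq m w + t^2 * (qf m A w - r * nsq m w)"
      unfolding key[symmetric] by (simp add: algebra_simps)
  qed
  hence "nsq m w = 0" by (intro quad_nonneg_imp nsq_nonneg)
  hence w0: "\<And>i. i \<in> {1..m} \<Longrightarrow> w i = 0" using nsq_zero by blast
  have "\<exists>i\<in>{1..m}. x0 i \<noteq> 0"
  proof (rule ccontr)
    assume "\<not> ?thesis"
    hence "nsq m x0 = 0" unfolding nsq_def by simp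
    thus False using nx0 by simp
  qed
  hence "is_eigenvalue m A r" unfolding is_eigenvalue_def
    using w0 unfolding w_def by (intro exI[of _ x0]) auto
  thus ?thesis using R by blast
qed

lemma sum_shift1: "(\<Sum>j<m. f (Suc j)) = (\<Sum>j\<in>{1..m}. (f j :: real))"
  by (simp add: sum.atLeast1_atMost_eq)

lemma eig_finite: "finite {\<mu>. is_eigenvalue m A \<mu>}"
proof -
  define M where "M = Matrix.mat m m (\<lambda>(i,j). A (Suc i) (Suc j))"
  have M: "M \<in> carrier_mat m m" unfolding M_def by simp
  have sub: "{\<mu>. is_eigenvalue m A \<mu>} \<subseteq> {k. poly (char_poly M) k = 0}"
  proof
    fix \<mu> assume "\<mu> \<in> {\<mu>. is_eigenvalue m A \<mu>}"
    then obtain x where nz: "\<exists>i\<in>{1..m}. x i \<noteq> 0"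
      and ev: "\<forall>i\<in>{1..m}. (\<Sum>j\<in>{1..m}. A i j * x j) = \<mu> * x i"
      unfolding is_eigenvalue_def by auto
    define v where "v = Matrix.vec m (\<lambda>i. x (Suc i))"
    have vc: "v \<in> carrier_vec m" unfolding v_def by simp
    have vnz: "v \<noteq> 0\<^sub>v m"
    proof
      assume "v = 0\<^sub>v m"
      from nz obtain i where i: "i \<in> {1..m}" "x i \<noteq> 0" by auto
      hence "v $ (i - 1) = 0" using \<open>v = 0\<^sub>v m\<close> by auto
      moreover have "v $ (i - 1) = x i" unfolding v_def using i(1) by auto
      ultimately show False using i by simp
    qed
    have "M *\<^sub>v v = \<mu> \<cdot>\<^sub>v v"
    proof (rule eq_vecI)
      fix k assume "k < dim_vec (\<mu> \<cdot>\<^sub>v v)"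
      hence k: "k < m" unfolding v_def by simp
      have "(M *\<^sub>v v) $ k = (\<Sum>j<m. A (Suc k) (Suc j) * x (Suc j))"
        using k unfolding M_def v_def by (simp add: mult_mat_vec_def scalar_prod_def lessThan_atLeast0)
      also have "\<dots> = (\<Sum>j\<in>{1..m}. A (Suc k) j * x j)" by (rule sum_shift1)
      also have "\<dots> = \<mu> * x (Suc k)" using ev k by auto
      finally show "(M *\<^sub>v v) $ k = (\<mu> \<cdot>\<^sub>v v) $ k" using k unfolding v_def by simp
    qed (simp add: M_def v_def)
    hence "eigenvalue M \<mu>" unfolding eigenvalue_def eigenvector_def using vc vnz M by auto
    thus "\<mu> \<in> {k. poly (char_poly M) k = 0}" using eigenvalue_root_char_poly[OF M] by simp
  qed
  have "char_poly M \<noteq> 0" using degree_monic_char_poly[OF M] by auto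
  hence "finite {k. poly (char_poly M) k = 0}" by (rule poly_roots_finite)
  thus ?thesis using sub finite_subset by blast
qed

lemma eig_pos:
  assumes "sym_pos_def m A" "is_eigenvalue m A \<mu>"
  shows "\<mu> > 0"
proof -
  obtain x where nz: "\<exists>i\<in>{1..m}. x i \<noteq> 0"
      and ev: "\<forall>i\<in>{1..m}. (\<Sum>j\<in>{1..m}. A i j * x j) = \<mu> * x i"
      using assms(2) unfolding is_eigenvalue_def by auto
  have pos: "qf m A x > 0" using assms(1) nz unfolding sym_pos_def_def qf_def by auto
  have "qf m A x = (\<Sum>i\<in>{1..m}. x i * (\<Sum>j\<in>{1..m}. A i j * x j))"
    unfolding qf_def by (simp add: sum_distrib_left mult_ac)
  also have "\<dots> = (\<Sum>i\<in>{1..m}. \<mu> * (x i)^2)" using ev by (intro sum.cong) (auto simp: power2_eq_square)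
  also have "\<dots> = \<mu> * nsq m x" unfolding nsq_def by (simp add: sum_distrib_left)
  finally have "\<mu> * nsq m x > 0" using pos by simp
  thus ?thesis using nsq_nonneg[of m x] by (simp add: zero_less_mult_iff)
qed



lemma per_nat: "periodic_grid N g \<Longrightarrow> g (l + int k * int N) = g l"
proof (induction k)
  case (Suc k)
  have "g (l + int (Suc k) * int N) = g ((l + int k * int N) + int N)" by (simp add: algebra_simps)
  also have "\<dots> = g (l + int k * int N)" using Suc.prems unfolding periodic_grid_def by blast
  finally show ?case using Suc by simp
qed simp

lemma per_int: "periodic_grid N g \<Longrightarrow> g (l + q * int N) = g l"
proof (cases "q \<ge> 0")
  case True
  assume p: "periodic_grid N g"
  from True obtain k where "q = int k" by (metis nonneg_int_cases)
  thus ?thesis using per_nat[OF p] by simp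
next
  case False
  assume p: "periodic_grid N g"
  from False obtain k where k: "q = - int k" by (metis neg_int_cases less_le not_le)
  have "g l = g ((l + q * int N) + int k * int N)" using k by (simp add: algebra_simps)
  also have "\<dots> = g (l + q * int N)" by (rule per_nat[OF p])
  finally show ?thesis by simp
qed

lemma per_mod: "periodic_grid N g \<Longrightarrow> g l = g (1 + (l - 1) mod int N)"
proof -
  assume p: "periodic_grid N g"
  have "l = (1 + (l - 1) mod int N) + ((l - 1) div int N) * int N"
    by (metis add.commute diff_add_cancel div_mult_mod_eq add.assoc)
  hence "g l = g ((1 + (l - 1) mod int N) + ((l - 1) div int N) * int N)" by simp
  also have "\<dots> = g (1 + (l - 1) mod int N)" by (rule per_int[OF p])
  finally show ?thesis .
qed

lemma sum_int_nat: "(\<Sum>l\<in>{1..int N}. g l) = (\<Sum>k<N. g (int k + 1))"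
  by (rule sum.reindex_bij_witness[of _ "\<lambda>k. int k + 1" "\<lambda>l. nat (l - 1)"]) auto

lemma sum_shift_per:
  assumes N: "N \<ge> 1" and p: "periodic_grid N g"
  shows "(\<Sum>l\<in>{1..int N}. g (l - 1)) = (\<Sum>l\<in>{1..int N}. g l)"
proof -
  obtain n where n: "N = Suc n" using N by (cases N) auto
  have g0: "g 0 = g (int N)" using p unfolding periodic_grid_def by (metis add.left_neutral)
  have "(\<Sum>l\<in>{1..int N}. g (l - 1)) = (\<Sum>k<N. g (int k))" unfolding sum_int_nat by simp
  also have "\<dots> = g 0 + (\<Sum>k<n. g (int (Suc k)))" unfolding n sum.lessThan_Suc_shift by simp
  also have "\<dots> = (\<Sum>k<n. g (int k + 1)) + g (int N)" using g0 by (simp add: ac_simps)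
  also have "\<dots> = (\<Sum>k<N. g (int k + 1))" unfolding n by (simp add: add.commute)
  also have "\<dots> = (\<Sum>l\<in>{1..int N}. g l)" unfolding sum_int_nat ..
  finally show ?thesis .
qed

lemma telescope:
  assumes N: "N \<ge> 1" and p: "periodic_grid N G"
  shows "(\<Sum>l\<in>{1..int N}. dh h G l) = 0"
  unfolding dh_def sum_divide_distrib[symmetric] sum_subtractf sum_shift_per[OF N p] by simp

definition Gf :: "nat \<Rightarrow> real \<Rightarrow> (nat \<Rightarrow> nat \<Rightarrow> int \<Rightarrow> real) \<Rightarrow> (nat \<Rightarrow> int \<Rightarrow> real) \<Rightarrow> nat \<Rightarrow> int \<Rightarrow> real" where
  "Gf n h Phi f i k = (\<Sum>j\<in>{1..n-1}. Phi i j k * Dh h (f j) k)"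

lemma LPhi_Gf: "LPhi n h Phi f i l = - dh h (Gf n h Phi f i) l"
  unfolding LPhi_def Gf_def ..

lemma Dh_per: "periodic_grid N g \<Longrightarrow> periodic_grid N (Dh h g)"
  unfolding periodic_grid_def Dh_def
  by (metis add.commute add.left_commute)

lemma dh_per: "periodic_grid N g \<Longrightarrow> periodic_grid N (dh h g)"
  unfolding periodic_grid_def dh_def
  by (metis add_diff_eq diff_add_eq)

lemma Gf_per:
  assumes "\<forall>j\<in>{1..n-1}. periodic_grid N (f j)" "\<forall>i j. periodic_grid N (Phi i j)"
  shows "periodic_grid N (Gf n h Phi f i)"
proof -
  have "\<forall>j\<in>{1..n-1}. periodic_grid N (Dh h (f j))" using assms(1) Dh_per by blast
  thus ?thesis using assms(2) unfolding periodic_grid_def Gf_def by simp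
qed

lemma LPhi_per:
  assumes "\<forall>j\<in>{1..n-1}. periodic_grid N (f j)" "\<forall>i j. periodic_grid N (Phi i j)"
  shows "periodic_grid N (LPhi n h Phi f i)"
proof -
  have "periodic_grid N (dh h (Gf n h Phi f i))" by (rule dh_per[OF Gf_per[OF assms]])
  thus ?thesis unfolding LPhi_Gf periodic_grid_def by simp
qed

lemma Gf_add: "Gf n h Phi (\<lambda>i l. f i l + g i l) i k = Gf n h Phi f i k + Gf n h Phi g i k"
proof -
  have "Dh h (\<lambda>l. f j l + g j l) k = Dh h (f j) k + Dh h (g j) k" for j
    unfolding Dh_def by (cases "h = 0") (simp_all add: field_simps)
  thus ?thesis unfolding Gf_def by (simp add: sum.distrib[symmetric] distrib_left)
qed

lemma LPhi_add: "LPhi n h Phi (\<lambda>i l. f i l + g i l) i l = LPhi n h Phi f i l + LPhi n h Phi g i l"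
  unfolding LPhi_Gf dh_def Gf_add by (cases "h = 0") (simp_all add: field_simps)

lemma LPhi_scale: "LPhi n h Phi (\<lambda>i l. c * f i l) i l = c * LPhi n h Phi f i l"
  unfolding LPhi_def dh_def Dh_def
  by (simp add: sum_distrib_left algebra_simps)

lemma LPhi_diff: "LPhi n h Phi (\<lambda>i l. f i l - g i l) i l = LPhi n h Phi f i l - LPhi n h Phi g i l"
proof -
  have "LPhi n h Phi (\<lambda>i l. f i l - g i l) i l = LPhi n h Phi (\<lambda>i l. f i l + (-1) * g i l) i l" by simp
  also have "\<dots> = LPhi n h Phi f i l - LPhi n h Phi g i l"
    unfolding LPhi_add LPhi_scale by simp
  finally show ?thesis .
qed

lemma sum_LPhi_zero:
  assumes N: "N \<ge> 1" "\<forall>j\<in>{1..n-1}. periodic_grid N (f j)" "\<forall>i j. periodic_grid N (Phi i j)"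
  shows "(\<Sum>l\<in>{1..int N}. LPhi n h Phi f i l) = 0"
  unfolding LPhi_Gf sum_negf telescope[OF N(1) Gf_per[OF N(2,3)]] by simp

lemma energy_one:
  assumes N: "N \<ge> 1" and pf: "periodic_grid N u" and pG: "periodic_grid N G"
  shows "(\<Sum>l\<in>{1..int N}. u l * (- dh h G l)) = (\<Sum>l\<in>{1..int N}. Dh h u l * G l)"
proof -
  have pw: "periodic_grid N (\<lambda>l. u (l + 1) * G l)"
    using pf pG unfolding periodic_grid_def by (metis add.commute add.left_commute)
  have sh: "(\<Sum>l\<in>{1..int N}. u l * G (l - 1)) = (\<Sum>l\<in>{1..int N}. u (l + 1) * G l)"
    using sum_shift_per[OF N pw] by simp
  have "(\<Sum>l\<in>{1..int N}. u l * (- dh h G l)) = ((\<Sum>l\<in>{1..int N}. u l * G (l - 1)) - (\<Sum>l\<in>{1..int N}. u l * G l)) / h"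
    unfolding dh_def sum_divide_distrib sum_subtractf[symmetric] by (intro sum.cong) (cases "h = 0"; auto simp: field_simps)+
  also have "\<dots> = (\<Sum>l\<in>{1..int N}. Dh h u l * G l)"
    unfolding sh Dh_def sum_divide_distrib sum_subtractf[symmetric] by (intro sum.cong) (auto simp: field_simps)
  finally show ?thesis .
qed

lemma energy:
  assumes N: "N \<ge> 1" "\<forall>j\<in>{1..n-1}. periodic_grid N (f j)" "\<forall>i j. periodic_grid N (Phi i j)"
  shows "(\<Sum>i\<in>{1..n-1}. \<Sum>l\<in>{1..int N}. f i l * LPhi n h Phi f i l)
       = (\<Sum>l\<in>{1..int N}. qf (n-1) (\<lambda>i j. Phi i j l) (\<lambda>i. Dh h (f i) l))"
proof -
  have "(\<Sum>i\<in>{1..n-1}. \<Sum>l\<in>{1..int N}. f i l * LPhi n h Phi f i l)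
      = (\<Sum>i\<in>{1..n-1}. \<Sum>l\<in>{1..int N}. Dh h (f i) l * Gf n h Phi f i l)"
  proof (rule sum.cong[OF refl])
    fix i assume "i \<in> {1..n-1}"
    hence "periodic_grid N (f i)" using N(2) by blast
    from energy_one[OF N(1) this Gf_per[OF N(2,3)]]
    show "(\<Sum>l\<in>{1..int N}. f i l * LPhi n h Phi f i l) = (\<Sum>l\<in>{1..int N}. Dh h (f i) l * Gf n h Phi f i l)"
      unfolding LPhi_Gf .
  qed
  also have "\<dots> = (\<Sum>l\<in>{1..int N}. \<Sum>i\<in>{1..n-1}. Dh h (f i) l * Gf n h Phi f i l)"
    by (rule sum.swap)
  also have "\<dots> = (\<Sum>l\<in>{1..int N}. qf (n-1) (\<lambda>i j. Phi i j l) (\<lambda>i. Dh h (f i) l))"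
    unfolding qf_def Gf_def by (simp add: sum_distrib_left mult_ac)
  finally show ?thesis .
qed



lemma qf_nonneg: "sym_pos_def m A \<Longrightarrow> qf m A x \<ge> 0"
proof (cases "\<exists>i\<in>{1..m}. x i \<noteq> 0")
  case True
  assume "sym_pos_def m A"
  thus ?thesis using True unfolding sym_pos_def_def qf_def by (auto intro: less_imp_le)
next
  case False thus ?thesis unfolding qf_def by simp
qed

lemma qf_zero_imp: "sym_pos_def m A \<Longrightarrow> qf m A x = 0 \<Longrightarrow> i \<in> {1..m} \<Longrightarrow> x i = 0"
  unfolding sym_pos_def_def qf_def by force

lemma mod_in_range: "N \<ge> 1 \<Longrightarrow> 1 + (l - 1) mod int N \<in> {1..int N}"
proof -
  assume "N \<ge> 1" hence p: "int N > 0" by simp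
  show ?thesis using pos_mod_bound[OF p, of "l - 1"] pos_mod_sign[OF p, of "l - 1"] by auto
qed

lemma mod_id: "l \<in> {1..int N} \<Longrightarrow> 1 + (l - 1) mod int N = l"
  by auto

lemma kernel:
  assumes N: "N \<ge> 1" and h: "h > 0"
    and spd: "\<forall>l. sym_pos_def (n-1) (\<lambda>i j. Phi i j l)"
    and pPhi: "\<forall>i j. periodic_grid N (Phi i j)"
    and pf: "\<forall>i\<in>{1..n-1}. periodic_grid N (f i)"
    and mz: "\<forall>i\<in>{1..n-1}. (\<Sum>l\<in>{1..int N}. f i l) = 0"
    and L0: "\<forall>i\<in>{1..n-1}. \<forall>l\<in>{1..int N}. LPhi n h Phi f i l = 0"
  shows "\<forall>i\<in>{1..n-1}. \<forall>l. f i l = 0"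
proof -
  have "(\<Sum>l\<in>{1..int N}. qf (n-1) (\<lambda>i j. Phi i j l) (\<lambda>i. Dh h (f i) l)) = 0"
    unfolding energy[OF N pf pPhi, symmetric] using L0 by simp
  moreover have "\<And>l. 0 \<le> qf (n-1) (\<lambda>i j. Phi i j l) (\<lambda>i. Dh h (f i) l)"
    using qf_nonneg spd by blast
  ultimately have q0: "\<forall>l\<in>{1..int N}. qf (n-1) (\<lambda>i j. Phi i j l) (\<lambda>i. Dh h (f i) l) = 0"
    by (subst (asm) sum_nonneg_eq_0_iff) auto
  have step: "f i (l + 1) = f i l" if i: "i \<in> {1..n-1}" and l: "l \<in> {1..int N}" for i l
  proof -
    have "Dh h (f i) l = 0" using qf_zero_imp[OF spd[rule_format] q0[rule_format, OF l] i] .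
    thus ?thesis unfolding Dh_def using h by simp
  qed
  show ?thesis
  proof (intro ballI allI)
    fix i l assume i: "i \<in> {1..n-1}"
    have c: "k < N \<Longrightarrow> f i (int k + 1) = f i 1" for k
    proof (induction k)
      case (Suc k)
      have "f i (int (Suc k) + 1) = f i ((int k + 1) + 1)" by (simp add: ac_simps)
      also have "\<dots> = f i (int k + 1)" using step[OF i, of "int k + 1"] Suc.prems by simp
      finally show ?case using Suc by simp
    qed simp
    have "(\<Sum>l\<in>{1..int N}. f i l) = (\<Sum>k<N. f i (int k + 1))" by (rule sum_int_nat)
    also have "\<dots> = (\<Sum>k<N. f i 1)" using c by simp
    finally have "real N * f i 1 = 0" using mz i by simp
    hence f1: "f i 1 = 0" using N by simp
    have "f i l = f i (1 + (l - 1) mod int N)" using per_mod pf i by blast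
    also have "\<dots> = f i (int (nat ((l - 1) mod int N)) + 1)" using N by (simp add: add.commute)
    also have "\<dots> = 0" using c[of "nat ((l - 1) mod int N)"] f1 N by (simp add: nat_less_iff)
    finally show "f i l = 0" .
  qed
qed



lemma lin_sum:
  fixes T :: "('a \<Rightarrow> real) \<Rightarrow> 'a \<Rightarrow> real"
  assumes add: "\<forall>x y. \<forall>k\<in>I. T (\<lambda>a. x a + y a) k = T x k + T y k"
    and scal: "\<forall>c x. \<forall>k\<in>I. T (\<lambda>a. c * x a) k = c * T x k"
    and k: "k \<in> I" and Q: "finite Q"
  shows "T (\<lambda>a. \<Sum>q\<in>Q. c q * d q a) k = (\<Sum>q\<in>Q. c q * T (d q) k)"
  using Q
proof (induction Q rule: finite_induct)
  case empty
  have "T (\<lambda>a. 0 * d undefined a) k = 0 * T (d undefined) k" using scal k by blast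
  thus ?case by simp
next
  case (insert q Q)
  have "T (\<lambda>a. \<Sum>q\<in>insert q Q. c q * d q a) k = T (\<lambda>a. c q * d q a + (\<Sum>q\<in>Q. c q * d q a)) k"
    using insert by simp
  also have "\<dots> = T (\<lambda>a. c q * d q a) k + T (\<lambda>a. \<Sum>q\<in>Q. c q * d q a) k"
    by (rule add[rule_format, OF k])
  also have "\<dots> = c q * T (d q) k + (\<Sum>q\<in>Q. c q * T (d q) k)"
    using scal k insert by simp
  finally show ?case using insert by simp
qed

lemma fin_inj_surj:
  fixes T :: "('a \<Rightarrow> real) \<Rightarrow> 'a \<Rightarrow> real"
  assumes fin: "finite I"
    and add: "\<forall>x y. \<forall>k\<in>I. T (\<lambda>a. x a + y a) k = T x k + T y k"
    and scal: "\<forall>c x. \<forall>k\<in>I. T (\<lambda>a. c * x a) k = c * T x k"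
    and inj: "\<forall>x. (\<forall>k\<in>I. T x k = 0) \<longrightarrow> (\<forall>a\<in>I. x a = 0)"
  shows "\<exists>x. \<forall>k\<in>I. T x k = b k"
proof -
  define K where "K = card I"
  obtain e where e: "bij_betw e {0..<K} I" using ex_bij_betw_nat_finite[OF fin] unfolding K_def by blast
  have einj: "\<And>p q. p < K \<Longrightarrow> q < K \<Longrightarrow> e p = e q \<Longrightarrow> p = q"
    using e unfolding bij_betw_def inj_on_def by auto
  have eI: "\<And>p. p < K \<Longrightarrow> e p \<in> I" using e unfolding bij_betw_def by auto
  have Ie: "\<And>k. k \<in> I \<Longrightarrow> \<exists>p<K. k = e p" using e unfolding bij_betw_def by auto
  define d where "d = (\<lambda>q a. if a = e q then 1 else (0::real))"
  define Mt where "Mt = Matrix.mat K K (\<lambda>(p,q). T (d q) (e p))"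
  have Mt: "Mt \<in> carrier_mat K K" unfolding Mt_def by simp
  define xv where "xv = (\<lambda>v::real vec. \<lambda>a. \<Sum>q\<in>{0..<K}. v $ q * d q a)"
  have xv_e: "xv v (e p) = v $ p" if p: "p < K" for v p
  proof -
    have "xv v (e p) = (\<Sum>q\<in>{0..<K}. if q = p then v $ q else 0)"
      unfolding xv_def d_def using einj p by (intro sum.cong) auto
    also have "\<dots> = v $ p" using p by simp
    finally show ?thesis .
  qed
  have T_xv: "T (xv v) (e p) = (Mt *\<^sub>v v) $ p" if p: "p < K" and v: "v \<in> carrier_vec K" for v p
  proof -
    have "T (xv v) (e p) = (\<Sum>q\<in>{0..<K}. v $ q * T (d q) (e p))"
      unfolding xv_def by (rule lin_sum[OF add scal eI[OF p]]) simp
    also have "\<dots> = (Mt *\<^sub>v v) $ p"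
      using p v unfolding Mt_def by (simp add: mult_mat_vec_def scalar_prod_def mult.commute)
    finally show ?thesis .
  qed
  have "det Mt \<noteq> 0"
  proof
    assume "det Mt = 0"
    then obtain v where v: "v \<in> carrier_vec K" "v \<noteq> 0\<^sub>v K" "Mt *\<^sub>v v = 0\<^sub>v K"
      using det_0_iff_vec_prod_zero_field[OF Mt] by blast
    have "\<forall>k\<in>I. T (xv v) k = 0"
    proof
      fix k assume "k \<in> I"
      then obtain p where p: "p < K" "k = e p" using Ie by blast
      show "T (xv v) k = 0" using T_xv[OF p(1) v(1)] v(3) p by simp
    qed
    hence "\<forall>a\<in>I. xv v a = 0" using inj by blast
    hence z: "\<And>p. p < K \<Longrightarrow> v $ p = 0" using xv_e eI by metis
    have "v = 0\<^sub>v K"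
      using v(1) z by (intro eq_vecI) auto
    thus False using v(2) by simp
  qed
  from det_non_zero_imp_unit[OF Mt this, of "()"]
  obtain B where B: "B \<in> carrier_mat K K" and AB: "Mt * B = 1\<^sub>m K"
    unfolding Units_def ring_mat_def by auto
  define bv where "bv = Matrix.vec K (\<lambda>p. b (e p))"
  have bv: "bv \<in> carrier_vec K" unfolding bv_def by simp
  define v where "v = B *\<^sub>v bv"
  have v: "v \<in> carrier_vec K" unfolding v_def using B bv by simp
  have Mv: "Mt *\<^sub>v v = bv" unfolding v_def using Mt B bv AB
    by (metis assoc_mult_mat_vec one_mult_mat_vec)
  show ?thesis
  proof (intro exI ballI)
    fix k assume "k \<in> I"
    then obtain p where p: "p < K" "k = e p" using Ie by blast
    show "T (xv v) k = b k" using T_xv[OF p(1) v] Mv p unfolding bv_def by simp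
  qed
qed



definition ext_grid :: "nat \<Rightarrow> nat \<Rightarrow> (nat \<times> int \<Rightarrow> real) \<Rightarrow> nat \<Rightarrow> int \<Rightarrow> real" where
  "ext_grid N n x = (\<lambda>i l. if i \<in> {1..n-1} then x (i, 1 + (l - 1) mod int N) else 0)"

definition Pr where
  "Pr n N h Phi phi f \<longleftrightarrow> in_C0 n N f \<and> (\<forall>i. i \<notin> {1..n-1} \<longrightarrow> f i = (\<lambda>_. 0))
       \<and> (\<forall>i\<in>{1..n-1}. \<forall>l. LPhi n h Phi f i l = phi i l)"

lemma ext_grid_per: "periodic_grid N (ext_grid N n x i)"
  unfolding periodic_grid_def ext_grid_def
proof
  fix l
  have "(l + int N - 1) mod int N = (l - 1) mod int N"
    by (metis add.commute add_diff_eq mod_add_self1)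
  thus "(if i \<in> {1..n - 1} then x (i, 1 + (l + int N - 1) mod int N) else 0) =
        (if i \<in> {1..n - 1} then x (i, 1 + (l - 1) mod int N) else 0)" by simp
qed

lemma ext_grid_add: "ext_grid N n (\<lambda>a. x a + y a) = (\<lambda>i l. ext_grid N n x i l + ext_grid N n y i l)"
  unfolding ext_grid_def by (auto simp: fun_eq_iff)

lemma ext_grid_scale: "ext_grid N n (\<lambda>a. c * x a) = (\<lambda>i l. c * ext_grid N n x i l)"
  unfolding ext_grid_def by (auto simp: fun_eq_iff)

lemma ext_grid_sum: "N \<ge> 1 \<Longrightarrow> i \<in> {1..n-1} \<Longrightarrow> (\<Sum>l\<in>{1..int N}. ext_grid N n x i l) = (\<Sum>l\<in>{1..int N}. x (i, l))"
  unfolding ext_grid_def by (intro sum.cong refl) (simp add: mod_id)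

definition Tg where
  "Tg n N h Phi x = (\<lambda>(i,l). LPhi n h Phi (ext_grid N n x) i l + (\<Sum>k\<in>{1..int N}. x (i,k)))"

lemma exists_unique:
  assumes N: "N \<ge> 1" and h: "h > 0"
    and spd: "\<forall>l. sym_pos_def (n-1) (\<lambda>i j. Phi i j l)"
    and pPhi: "\<forall>i j. periodic_grid N (Phi i j)"
    and phi: "in_C0 n N phi"
  shows "\<exists>!f. Pr n N h Phi phi f"
proof -
  define I where "I = {1..n-1} \<times> {1..int N}"
  have fin: "finite I" unfolding I_def by simp
  have pext: "\<forall>j\<in>{1..n-1}. periodic_grid N (ext_grid N n x j)" for x using ext_grid_per by blast
  have add: "\<forall>x y. \<forall>k\<in>I. Tg n N h Phi (\<lambda>a. x a + y a) k = Tg n N h Phi x k + Tg n N h Phi y k"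
    unfolding Tg_def ext_grid_add by (auto simp: LPhi_add sum.distrib)
  have scal: "\<forall>c x. \<forall>k\<in>I. Tg n N h Phi (\<lambda>a. c * x a) k = c * Tg n N h Phi x k"
    unfolding Tg_def ext_grid_scale by (auto simp: LPhi_scale sum_distrib_left algebra_simps)
  have inj: "\<forall>x. (\<forall>k\<in>I. Tg n N h Phi x k = 0) \<longrightarrow> (\<forall>a\<in>I. x a = 0)"
  proof (intro allI impI)
    fix x assume T0: "\<forall>k\<in>I. Tg n N h Phi x k = 0"
    define f where "f = ext_grid N n x"
    define S where "S = (\<lambda>i. \<Sum>k\<in>{1..int N}. x (i,k))"
    have eq: "LPhi n h Phi f i l + S i = 0" if "i \<in> {1..n-1}" "l \<in> {1..int N}" for i l
      using T0 that unfolding I_def Tg_def f_def S_def by auto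
    have S0: "S i = 0" if i: "i \<in> {1..n-1}" for i
    proof -
      have "(\<Sum>l\<in>{1..int N}. LPhi n h Phi f i l + S i) = 0" using eq i by simp
      hence "real N * S i = 0" unfolding sum.distrib sum_LPhi_zero[OF N pext[of x] pPhi, folded f_def] by simp
      thus ?thesis using N by simp
    qed
    have "\<forall>i\<in>{1..n-1}. \<forall>l. f i l = 0"
    proof (rule kernel[OF N h spd pPhi])
      show "\<forall>i\<in>{1..n-1}. periodic_grid N (f i)" unfolding f_def by (rule pext)
      show "\<forall>i\<in>{1..n-1}. (\<Sum>l\<in>{1..int N}. f i l) = 0"
        unfolding f_def using ext_grid_sum[OF N] S0 unfolding S_def by simp
      show "\<forall>i\<in>{1..n-1}. \<forall>l\<in>{1..int N}. LPhi n h Phi f i l = 0" using eq S0 by simp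
    qed
    hence z: "\<forall>i\<in>{1..n-1}. \<forall>l. x (i, 1 + (l - 1) mod int N) = 0" unfolding f_def ext_grid_def by simp
    show "\<forall>a\<in>I. x a = 0"
    proof
      fix a assume "a \<in> I"
      then obtain i l where a: "a = (i,l)" "i \<in> {1..n-1}" "l \<in> {1..int N}" unfolding I_def by blast
      have "x (i, 1 + (l - 1) mod int N) = 0" using z a(2) by blast
      thus "x a = 0" using mod_id[OF a(3)] a(1) by simp
    qed
  qed
  obtain x where x: "\<forall>k\<in>I. Tg n N h Phi x k = (\<lambda>(i,l). phi i l) k"
    using fin_inj_surj[OF fin add scal inj] by blast
  define f where "f = ext_grid N n x"
  define S where "S = (\<lambda>i. \<Sum>k\<in>{1..int N}. x (i,k))"
  have pphi: "\<forall>i\<in>{1..n-1}. periodic_grid N (phi i)" and mphi: "\<forall>i\<in>{1..n-1}. (\<Sum>l\<in>{1..int N}. phi i l) = 0"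
    using phi unfolding in_C0_def by auto
  have eq: "LPhi n h Phi f i l + S i = phi i l" if "i \<in> {1..n-1}" "l \<in> {1..int N}" for i l
    using x that unfolding I_def Tg_def f_def S_def by auto
  have S0: "S i = 0" if i: "i \<in> {1..n-1}" for i
  proof -
    have "(\<Sum>l\<in>{1..int N}. LPhi n h Phi f i l + S i) = (\<Sum>l\<in>{1..int N}. phi i l)" using eq i by simp
    hence "real N * S i = 0" unfolding sum.distrib sum_LPhi_zero[OF N pext[of x] pPhi, folded f_def] using mphi i by simp
    thus ?thesis using N by simp
  qed
  have Pf: "Pr n N h Phi phi f"
    unfolding Pr_def in_C0_def
  proof (intro conjI ballI allI impI)
    fix i assume i: "i \<in> {1..n-1}"
    show "periodic_grid N (f i)" unfolding f_def by (rule ext_grid_per)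
    show "(\<Sum>l\<in>{1..int N}. f i l) = 0" unfolding f_def ext_grid_sum[OF N i] using S0[OF i] unfolding S_def .
  next
    fix i :: nat assume "i \<notin> {1..n-1}"
    thus "f i = (\<lambda>_. 0)" unfolding f_def ext_grid_def by auto
  next
    fix i l assume i: "i \<in> {1..n-1}"
    have "LPhi n h Phi f i l = LPhi n h Phi f i (1 + (l - 1) mod int N)"
      using per_mod LPhi_per[OF pext[of x, folded f_def] pPhi] by blast
    also have "\<dots> = phi i (1 + (l - 1) mod int N)" using eq[OF i mod_in_range[OF N]] S0[OF i] by simp
    also have "\<dots> = phi i l" using per_mod pphi i by metis
    finally show "LPhi n h Phi f i l = phi i l" .
  qed
  show ?thesis
  proof (rule ex1I[of _ f])
    show "Pr n N h Phi phi f" by (rule Pf)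
  next
    fix g assume Pg: "Pr n N h Phi phi g"
    define d where "d = (\<lambda>i l. g i l - f i l)"
    have "\<forall>i\<in>{1..n-1}. \<forall>l. d i l = 0"
    proof (rule kernel[OF N h spd pPhi])
      show "\<forall>i\<in>{1..n-1}. periodic_grid N (d i)" using Pg Pf unfolding Pr_def in_C0_def periodic_grid_def d_def by auto
      show "\<forall>i\<in>{1..n-1}. (\<Sum>l\<in>{1..int N}. d i l) = 0" using Pg Pf unfolding Pr_def in_C0_def d_def by (auto simp: sum_subtractf)
      show "\<forall>i\<in>{1..n-1}. \<forall>l\<in>{1..int N}. LPhi n h Phi d i l = 0" using Pg Pf unfolding Pr_def d_def LPhi_diff by auto
    qed
    hence "\<forall>i l. g i l = f i l" using Pg Pf unfolding Pr_def d_def by (metis eq_iff_diff_eq_0)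
    thus "g = f" by (auto simp: fun_eq_iff)
  qed
qed



lemma lam_props:
  assumes n: "n \<ge> 2" and N: "N \<ge> 1" and spd: "\<forall>l. sym_pos_def (n-1) (\<lambda>i j. Phi i j l)"
  shows "lambda_min n N Phi > 0 \<and> (\<forall>l\<in>{1..int N}. \<forall>x. lambda_min n N Phi * nsq (n-1) x \<le> qf (n-1) (\<lambda>i j. Phi i j l) x)"
proof -
  define E where "E = (\<Union>l\<in>{1..int N}. {mu. is_eigenvalue (n-1) (\<lambda>i j. Phi i j l) mu})"
  have lm: "lambda_min n N Phi = Min E" unfolding lambda_min_def E_def ..
  have fin: "finite E" unfolding E_def by (intro finite_UN_I) (auto intro: eig_finite)
  have m1: "n - 1 \<ge> 1" using n by simp
  have ray: "\<exists>\<mu>. is_eigenvalue (n-1) (\<lambda>i j. Phi i j l) \<mu> \<and> (\<forall>x. \<mu> * nsq (n-1) x \<le> qf (n-1) (\<lambda>i j. Phi i j l) x)" for l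
  proof -
    have "\<forall>i\<in>{1..n-1}. \<forall>j\<in>{1..n-1}. Phi i j l = Phi j i l" using spd unfolding sym_pos_def_def by blast
    from rayleigh_eig[OF m1 this] show ?thesis .
  qed
  have ne: "E \<noteq> {}"
  proof -
    obtain \<mu> where "is_eigenvalue (n-1) (\<lambda>i j. Phi i j 1) \<mu>" using ray by blast
    thus ?thesis unfolding E_def using N by auto
  qed
  have "Min E \<in> E" using Min_in[OF fin ne] .
  then obtain l where l: "is_eigenvalue (n-1) (\<lambda>i j. Phi i j l) (Min E)" unfolding E_def by auto
  have pos: "Min E > 0" using eig_pos[OF spd[rule_format] l] .
  have "\<forall>l\<in>{1..int N}. \<forall>x. Min E * nsq (n-1) x \<le> qf (n-1) (\<lambda>i j. Phi i j l) x"
  proof (intro ballI allI)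
    fix l x assume l: "l \<in> {1..int N}"
    obtain \<mu> where mu: "is_eigenvalue (n-1) (\<lambda>i j. Phi i j l) \<mu>" "\<forall>x. \<mu> * nsq (n-1) x \<le> qf (n-1) (\<lambda>i j. Phi i j l) x"
      using ray by blast
    have "\<mu> \<in> E" unfolding E_def using l mu(1) by auto
    hence "Min E \<le> \<mu>" using Min_le[OF fin] by blast
    hence "Min E * nsq (n-1) x \<le> \<mu> * nsq (n-1) x" using nsq_nonneg by (rule mult_right_mono)
    also have "\<dots> \<le> qf (n-1) (\<lambda>i j. Phi i j l) x" using mu(2) by blast
    finally show "Min E * nsq (n-1) x \<le> qf (n-1) (\<lambda>i j. Phi i j l) x" .
  qed
  thus ?thesis using pos lm by simp
qed

lemma path_bound_k:
  fixes u :: "int \<Rightarrow> real"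
  shows "\<bar>u (a + int k) - u a\<bar> \<le> (\<Sum>l\<in>{a..<a + int k}. \<bar>u (l + 1) - u l\<bar>)"
proof (induction k)
  case (Suc k)
  have set: "{a..<a + int (Suc k)} = insert (a + int k) {a..<a + int k}" by auto
  have e: "a + int (Suc k) = a + int k + 1" by simp
  have "\<bar>u (a + int (Suc k)) - u a\<bar> \<le> \<bar>u (a + int k + 1) - u (a + int k)\<bar> + \<bar>u (a + int k) - u a\<bar>"
    unfolding e using abs_triangle_ineq[of "u (a + int k + 1) - u (a + int k)" "u (a + int k) - u a"] by simp
  also have "\<dots> \<le> \<bar>u (a + int k + 1) - u (a + int k)\<bar> + (\<Sum>l\<in>{a..<a + int k}. \<bar>u (l + 1) - u l\<bar>)"
    using Suc by simp
  also have "\<dots> = (\<Sum>l\<in>{a..<a + int (Suc k)}. \<bar>u (l + 1) - u l\<bar>)" unfolding set by simp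
  finally show ?case .
qed simp

lemma path_bound_le:
  fixes u :: "int \<Rightarrow> real"
  assumes "a \<le> b" "a \<in> {1..int N}" "b \<in> {1..int N}"
  shows "\<bar>u b - u a\<bar> \<le> (\<Sum>l\<in>{1..int N}. \<bar>u (l + 1) - u l\<bar>)"
proof -
  have b: "b = a + int (nat (b - a))" using assms by simp
  have "\<bar>u b - u a\<bar> \<le> (\<Sum>l\<in>{a..<b}. \<bar>u (l + 1) - u l\<bar>)" using path_bound_k[of u a "nat (b - a)"] b by simp
  also have "\<dots> \<le> (\<Sum>l\<in>{1..int N}. \<bar>u (l + 1) - u l\<bar>)"
  proof (rule Groups_Big.sum_mono2)
    show "{a..<b} \<subseteq> {1..int N}" using assms by auto
  qed auto
  finally show ?thesis .
qed

lemma path_bound: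
  fixes u :: "int \<Rightarrow> real"
  assumes "a \<in> {1..int N}" "b \<in> {1..int N}"
  shows "\<bar>u b - u a\<bar> \<le> (\<Sum>l\<in>{1..int N}. \<bar>u (l + 1) - u l\<bar>)"
proof (cases "a \<le> b")
  case True thus ?thesis using path_bound_le assms by blast
next
  case False
  hence "\<bar>u a - u b\<bar> \<le> (\<Sum>l\<in>{1..int N}. \<bar>u (l + 1) - u l\<bar>)" using path_bound_le[of b a] assms by simp
  thus ?thesis by (metis abs_minus_commute)
qed

lemma mean_zero_bound:
  assumes N: "N \<ge> 1" and mz: "(\<Sum>l\<in>{1..int N}. u l) = (0::real)" and l0: "l0 \<in> {1..int N}"
  shows "\<bar>u l0\<bar> \<le> (\<Sum>l\<in>{1..int N}. \<bar>u (l + 1) - u l\<bar>)"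
proof -
  have "\<exists>l1\<in>{1..int N}. u l0 * u l1 \<le> 0"
  proof (rule ccontr)
    assume "\<not> ?thesis"
    hence "\<forall>l\<in>{1..int N}. u l0 * u l > 0" by auto
    hence "(\<Sum>l\<in>{1..int N}. u l0 * u l) > 0" using N by (intro sum_pos) auto
    moreover have "(\<Sum>l\<in>{1..int N}. u l0 * u l) = 0" using mz by (simp add: sum_distrib_left[symmetric])
    ultimately show False by simp
  qed
  then obtain l1 where l1: "l1 \<in> {1..int N}" "u l0 * u l1 \<le> 0" by blast
  have "\<bar>u l0\<bar> \<le> \<bar>u l0 - u l1\<bar>"
    using l1(2) by (cases "u l0 \<ge> 0"; cases "u l1 \<ge> 0") (auto simp: mult_le_0_iff)
  also have "\<dots> \<le> (\<Sum>l\<in>{1..int N}. \<bar>u (l + 1) - u l\<bar>)" by (rule path_bound[OF l1(1) l0])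
  finally show ?thesis .
qed



lemma Linf_set: "{\<bar>f i l\<bar> | i l. i \<in> {1..n-1} \<and> l \<in> {1..int N}} = (\<lambda>(i,l). \<bar>f i l\<bar>) ` ({1..n-1} \<times> {1..int N})"
  by force

lemma Linf_ge: "i \<in> {1..n-1} \<Longrightarrow> l \<in> {1..int N} \<Longrightarrow> \<bar>f i l\<bar> \<le> Linf_norm n N f"
  unfolding Linf_norm_def Linf_set by (rule Max_ge) auto

lemma Linf_attained:
  assumes "n \<ge> 2" "N \<ge> 1"
  shows "\<exists>i\<in>{1..n-1}. \<exists>l\<in>{1..int N}. Linf_norm n N f = \<bar>f i l\<bar>"
proof -
  have "Linf_norm n N f \<in> (\<lambda>(i,l). \<bar>f i l\<bar>) ` ({1..n-1} \<times> {1..int N})"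
    unfolding Linf_norm_def Linf_set using assms by (intro Max_in) auto
  thus ?thesis by auto
qed

lemma estimate:
  assumes n: "n \<ge> 2" and N: "N \<ge> 1" and h: "h > 0"
    and pPhi: "\<forall>i j. periodic_grid N (Phi i j)"
    and Pf: "Pr n N h Phi phi f"
    and Mb: "\<forall>i\<in>{1..n-1}. \<forall>l\<in>{1..int N}. \<bar>phi i l\<bar> \<le> M"
    and lam: "lam > 0"
    and lb: "\<forall>l\<in>{1..int N}. \<forall>x. lam * nsq (n-1) x \<le> qf (n-1) (\<lambda>i j. Phi i j l) x"
  shows "Linf_norm n N f \<le> h^2 * real N^2 * real (n-1) * M / lam"
proof -
  define m where "m = n - 1"
  define F where "F = Linf_norm n N f"
  obtain i0 l0 where i0: "i0 \<in> {1..m}" and l0: "l0 \<in> {1..int N}" and Fi: "F = \<bar>f i0 l0\<bar>"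
    using Linf_attained[OF n N, of f] unfolding F_def m_def by blast
  have F0: "F \<ge> 0" using Fi by simp
  have "(1::nat) \<in> {1..n-1}" "(1::int) \<in> {1..int N}" using n N by auto
  hence "\<bar>phi 1 1\<bar> \<le> M" using Mb by blast
  hence M0: "M \<ge> 0" by linarith
  have pf: "\<forall>i\<in>{1..n-1}. periodic_grid N (f i)" and mz: "\<forall>i\<in>{1..n-1}. (\<Sum>l\<in>{1..int N}. f i l) = 0"
    and Lf: "\<forall>i\<in>{1..n-1}. \<forall>l. LPhi n h Phi f i l = phi i l"
    using Pf unfolding Pr_def in_C0_def by auto
  define SS where "SS = (\<Sum>l\<in>{1..int N}. nsq m (\<lambda>i. Dh h (f i) l))"
  have "lam * SS = (\<Sum>l\<in>{1..int N}. lam * nsq m (\<lambda>i. Dh h (f i) l))"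
    unfolding SS_def by (simp add: sum_distrib_left)
  also have "\<dots> \<le> (\<Sum>l\<in>{1..int N}. qf m (\<lambda>i j. Phi i j l) (\<lambda>i. Dh h (f i) l))"
    using lb unfolding m_def by (intro sum_mono) auto
  also have "\<dots> = (\<Sum>i\<in>{1..m}. \<Sum>l\<in>{1..int N}. f i l * LPhi n h Phi f i l)"
    unfolding m_def by (rule energy[OF N pf pPhi, symmetric])
  also have "\<dots> = (\<Sum>i\<in>{1..m}. \<Sum>l\<in>{1..int N}. f i l * phi i l)"
    using Lf unfolding m_def by simp
  also have "\<dots> \<le> (\<Sum>i\<in>{1..m}. \<Sum>l\<in>{1..int N}. F * M)"
  proof (intro sum_mono)
    fix i l assume i: "i \<in> {1..m}" and l: "l \<in> {1..int N}"
    have "f i l * phi i l \<le> \<bar>f i l\<bar> * \<bar>phi i l\<bar>" by (simp add: abs_mult[symmetric])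
    also have "\<dots> \<le> F * M"
      using Linf_ge[of i n l N f] Mb i l unfolding F_def m_def by (intro mult_mono) auto
    finally show "f i l * phi i l \<le> F * M" .
  qed
  also have "\<dots> = real m * real N * F * M" by simp
  finally have E1: "lam * SS \<le> real m * real N * F * M" .
  define D where "D = (\<lambda>l. Dh h (f i0) l)"
  have "F \<le> (\<Sum>l\<in>{1..int N}. \<bar>f i0 (l + 1) - f i0 l\<bar>)"
    unfolding Fi using mean_zero_bound[OF N _ l0] mz i0 unfolding m_def by blast
  also have "\<dots> = h * (\<Sum>l\<in>{1..int N}. \<bar>D l\<bar>)"
    unfolding D_def Dh_def sum_distrib_left using h by (intro sum.cong) (auto simp: abs_divide)
  finally have P1: "F \<le> h * (\<Sum>l\<in>{1..int N}. \<bar>D l\<bar>)" .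
  have "(\<Sum>l\<in>{1..int N}. \<bar>D l\<bar>)^2 \<le> (\<Sum>l\<in>{1..int N}. \<bar>D l\<bar>^2) * real (card {1..int N})"
    by (rule sum_squared_le_sum_of_squares)
  also have "\<dots> = (\<Sum>l\<in>{1..int N}. (D l)^2) * real N" by simp
  also have "\<dots> \<le> SS * real N"
  proof (rule mult_right_mono)
    show "(\<Sum>l\<in>{1..int N}. (D l)^2) \<le> SS" unfolding SS_def nsq_def D_def
      using i0 by (intro sum_mono member_le_sum) auto
  qed simp
  finally have CS: "(\<Sum>l\<in>{1..int N}. \<bar>D l\<bar>)^2 \<le> SS * real N" .
  have "F^2 \<le> (h * (\<Sum>l\<in>{1..int N}. \<bar>D l\<bar>))^2" using P1 F0 by (intro power_mono) auto
  also have "\<dots> = h^2 * (\<Sum>l\<in>{1..int N}. \<bar>D l\<bar>)^2" by (simp add: power_mult_distrib)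
  also have "\<dots> \<le> h^2 * (SS * real N)" using CS by (intro mult_left_mono) auto
  also have "\<dots> \<le> h^2 * ((real m * real N * F * M / lam) * real N)"
  proof -
    have "SS \<le> real m * real N * F * M / lam" using E1 lam by (simp add: field_simps)
    thus ?thesis by (intro mult_left_mono mult_right_mono) auto
  qed
  finally have F2: "F^2 \<le> h^2 * ((real m * real N * F * M / lam) * real N)" .
  show ?thesis
  proof (cases "F = 0")
    case True thus ?thesis using M0 lam unfolding F_def by simp
  next
    case False
    hence Fp: "F > 0" using F0 by simp
    have eqX: "h^2 * ((real m * real N * F * M / lam) * real N) = F * (h^2 * real N^2 * real m * M / lam)"
      using lam by (simp add: power2_eq_square field_simps)
    have "F * F \<le> F * (h^2 * real N^2 * real m * M / lam)"
      using F2[unfolded eqX] unfolding power2_eq_square[of F] .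
    hence "F \<le> h^2 * real N^2 * real m * M / lam" by (rule iffD1[OF mult_le_cancel_left_pos[OF Fp]])
    thus ?thesis unfolding F_def m_def .
  qed
qed



lemma ring_aux: "a * b * c * M / lam * q * c = a * (c * c) * (M / lam) * (b * (q::real))"
  by (simp add: divide_inverse mult_ac)

lemma final_arith:
  fixes L h M lam X m :: real
  assumes L: "L > 0" and h: "h > 0" "h \<le> L" and m: "m \<ge> 1" and K: "M / lam \<ge> 0"
    and X: "X \<le> L^2 * m * M / lam"
  shows "X \<le> (L^2 * sqrt L * sqrt m) * M / lam * h powr (-1/2) * sqrt m"
proof -
  have e: "(-1/2::real) = - (1/2)" by simp
  have hp: "h powr (-1/2) = inverse (sqrt h)"
    unfolding e powr_minus using h by (simp add: powr_half_sqrt)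
  have s: "sqrt h \<le> sqrt L" using h by simp
  have sh: "sqrt h > 0" using h by simp
  have g1: "sqrt L * inverse (sqrt h) \<ge> 1" using s sh by (simp add: divide_inverse[symmetric])
  have mm: "sqrt m * sqrt m = m" using m by simp
  have "(L^2 * sqrt L * sqrt m) * M / lam * h powr (-1/2) * sqrt m
        = (L^2 * m * (M / lam)) * (sqrt L * inverse (sqrt h))"
    unfolding hp ring_aux mm ..
  also have "\<dots> \<ge> L^2 * m * (M / lam) * 1"
  proof -
    have "0 \<le> L^2 * m" using m by simp
    hence "0 \<le> L^2 * m * (M / lam)" using K by (rule mult_nonneg_nonneg)
    from mult_left_mono[OF g1 this] show ?thesis .
  qed
  finally show ?thesis using X by simp
qed

theorem lemma3p2:
  fixes n :: nat and L :: real
  assumes "n \<ge> 2" and "L > 0"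
  shows "\<exists>C>0. \<forall>(N::nat) Phi phi (M::real) lam.
     N \<ge> 1 \<longrightarrow>
     (\<forall>i j. periodic_grid N (Phi i j)) \<longrightarrow>
     (\<forall>l. sym_pos_def (n-1) (\<lambda>i j. Phi i j l)) \<longrightarrow>
     lam = lambda_min n N Phi \<longrightarrow>
     in_C0 n N phi \<longrightarrow>
     Linf_norm n N phi \<le> M \<longrightarrow>
     Linf_norm n N (LPhi_inv n N (L / real N) Phi phi)
       \<le> C * M / lam * (L / real N) powr (-1/2) * sqrt (real (n-1))"
proof -
  note n = assms(1) and L = assms(2)
  have m1: "real (n-1) \<ge> 1" using n by simp
  define C where "C = L^2 * sqrt L * sqrt (real (n-1))"
  have Cpos: "C > 0" unfolding C_def using L m1 by simp
  show ?thesis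
  proof (intro exI[of _ C] conjI allI impI Cpos)
    fix N :: nat and Phi phi and M :: real and lam
    assume N: "N \<ge> 1" and pPhi: "\<forall>i j. periodic_grid N (Phi i j)"
      and spd: "\<forall>l. sym_pos_def (n-1) (\<lambda>i j. Phi i j l)"
      and lamd: "lam = lambda_min n N Phi" and phi: "in_C0 n N phi"
      and Mb0: "Linf_norm n N phi \<le> M"
    define h where "h = L / real N"
    have h: "h > 0" unfolding h_def using L N by simp
    have hL: "h \<le> L" unfolding h_def using L N by (simp add: field_simps)
    have hN: "h^2 * real N^2 = L^2" unfolding h_def using N by (simp add: field_simps)
    have lp: "lam > 0" "\<forall>l\<in>{1..int N}. \<forall>x. lam * nsq (n-1) x \<le> qf (n-1) (\<lambda>i j. Phi i j l) x"
      using lam_props[OF n N spd] lamd by auto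
    have EU: "\<exists>!f. Pr n N h Phi phi f" by (rule exists_unique[OF N h spd pPhi phi])
    have inv: "LPhi_inv n N h Phi phi = (THE f. Pr n N h Phi phi f)"
      unfolding LPhi_inv_def Pr_def ..
    have Pf: "Pr n N h Phi phi (LPhi_inv n N h Phi phi)" unfolding inv by (rule theI'[OF EU])
    have Mb: "\<forall>i\<in>{1..n-1}. \<forall>l\<in>{1..int N}. \<bar>phi i l\<bar> \<le> M"
      using Linf_ge Mb0 order_trans by blast
    have "(1::nat) \<in> {1..n-1}" "(1::int) \<in> {1..int N}" using n N by auto
    hence "\<bar>phi 1 1\<bar> \<le> M" using Mb by blast
    hence M0: "M \<ge> 0" by linarith
    have est: "Linf_norm n N (LPhi_inv n N h Phi phi) \<le> L^2 * real (n-1) * M / lam"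
      using estimate[OF n N h pPhi Pf Mb lp(1) lp(2)] unfolding hN .
    have "Linf_norm n N (LPhi_inv n N h Phi phi) \<le> C * M / lam * h powr (-1/2) * sqrt (real (n-1))"
      unfolding C_def by (rule final_arith[OF L h hL m1 _ est]) (use M0 lp(1) in simp)
    thus "Linf_norm n N (LPhi_inv n N (L / real N) Phi phi)
       \<le> C * M / lam * (L / real N) powr (-1/2) * sqrt (real (n-1))" unfolding h_def .
  qed
qed

end
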